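(* Let $T\subset V$ be an open cone with basepoint $b\in T$, let $p\in\partial T\setminus[0]_T$, let $z\in T$, and put $y_\lambda:=(1-\lambda)p+\lambda z$ for $\lambda\in(0,1)$. Then $\lim_{\lambda\to0}r_{T,p}(y_\lambda)=-RF_T(b,p)$.
   Context: $V$ is a finite-dimensional real vector space. An open cone is a nonempty open convex set $T\subset V$ with $\lambda T\subseteq T$ for all $\lambda>0$ and $0\notin T$; $\partial T$ its boundary. Write $x\le_T y$ iff $y-x\in\overline T$, $[0]_T:=\overline T\cap(-\overline T)$. $M_T(y/x):=\inf\{\lambda>0:y\le_T\lambda x\}$ for $y\in V$, $x\in T$; the reverse Funk function is $RF_T(x,y):=\log M_T(y/x)$ for $x\in T$, $y\in V$. For $p\in\partial T\setminus[0]_T$, $r_{T,p}(x):=RF_T(x,p)-RF_T(b,p)$, $x\in T$. *)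

theory Defs
  imports "HOL-Analysis.Analysis"
begin

definition open_cone :: "'a::euclidean_space set \<Rightarrow> bool" where
  "open_cone T \<longleftrightarrow> T \<noteq> {} \<and> open T \<and> convex T \<and>
     (\<forall>c::real. c > 0 \<longrightarrow> (\<lambda>x. c *\<^sub>R x) ` T \<subseteq> T) \<and> 0 \<notin> T"

definition cone_le :: "'a::euclidean_space set \<Rightarrow> 'a \<Rightarrow> 'a \<Rightarrow> bool" where
  "cone_le T x y \<longleftrightarrow> y - x \<in> closure T"

definition cone_zero :: "'a::euclidean_space set \<Rightarrow> 'a set" where
  "cone_zero T = closure T \<inter> uminus ` closure T"

definition cone_M :: "'a::euclidean_space set \<Rightarrow> 'a \<Rightarrow> 'a \<Rightarrow> real" where
  "cone_M T y x = Inf {c::real. c > 0 \<and> cone_le T y (c *\<^sub>R x)}"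

definition reverse_funk :: "'a::euclidean_space set \<Rightarrow> 'a \<Rightarrow> 'a \<Rightarrow> real" where
  "reverse_funk T x y = ln (cone_M T y x)"

definition horofun :: "'a::euclidean_space set \<Rightarrow> 'a \<Rightarrow> 'a \<Rightarrow> 'a \<Rightarrow> real" where
  "horofun T b p x = reverse_funk T x p - reverse_funk T b p"

end

theory Submission
  imports Defs
begin

theorem mainTheorem19:
  fixes T :: "'a::euclidean_space set" and b p z :: 'a
  assumes "open_cone T" and "b \<in> T"
    and "p \<in> frontier T - cone_zero T" and "z \<in> T"
  shows "((\<lambda>l::real. horofun T b p ((1 - l) *\<^sub>R p + l *\<^sub>R z))
           \<longlongrightarrow> - reverse_funk T b p) (at_right 0)"
proof -
  let ?C = "closure T"
  have cvx: "convex T" and sc: "\<And>c x. c > 0 \<Longrightarrow> x \<in> T \<Longrightarrow> c *\<^sub>R x \<in> T"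
    using assms(1) unfolding open_cone_def by auto
  have scC: "c *\<^sub>R x \<in> ?C" if "c > 0" "x \<in> ?C" for c x
  proof -
    have "c *\<^sub>R x \<in> closure ((*\<^sub>R) c ` T)" using that closure_scaleR by blast
    also have "\<dots> \<subseteq> ?C" by (rule closure_mono) (use sc that in auto)
    finally show ?thesis .
  qed
  have addC: "x + y \<in> ?C" if "x \<in> ?C" "y \<in> ?C" for x y
  proof -
    have "(1/2) *\<^sub>R x + (1/2) *\<^sub>R y \<in> ?C"
      using convex_closure[OF cvx] that by (simp add: convex_def)
    from scC[OF _ this, of 2] show ?thesis by (simp add: algebra_simps)
  qed
  have zC: "z \<in> ?C" using assms(4) closure_subset by blast
  have pC: "p \<in> ?C" using assms(3) frontier_def by auto
  have npC: "- p \<notin> ?C"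
  proof
    assume "- p \<in> ?C"
    then have "p \<in> uminus ` ?C" by (metis image_eqI minus_minus)
    with pC assms(3) show False unfolding cone_zero_def by auto
  qed
  obtain r where r: "r > 0" "ball (- p) r \<inter> ?C = {}"
    using open_contains_ball[of "- ?C"] npC by (metis Diff_eq_empty_iff Int_commute
        Diff_disjoint closed_closure open_Compl ComplI inf.orderE disjoint_eq_subset_Compl
        double_compl)
  define e where "e = min (1/2) (r / (norm z + 1))"
  have e: "e > 0" "e \<le> 1/2"
  proof -
    have "r / (norm z + 1) > 0" using r by (intro divide_pos_pos) (auto intro: add_nonneg_pos)
    then show "e > 0" "e \<le> 1/2" unfolding e_def by linarith+
  qed
  have far: "t *\<^sub>R z - p \<notin> ?C" if "0 \<le> t" "t \<le> e" for t
  proof -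
    have "e * norm z \<le> r / (norm z + 1) * norm z" unfolding e_def
      by (intro mult_right_mono) auto
    also have "\<dots> < r"
    proof -
      have "r * norm z < r * (norm z + 1)" using r by simp
      then show ?thesis by (simp add: divide_simps add_pos_nonneg) (smt (verit) norm_ge_zero)
    qed
    finally have "t * norm z < r" using that
      by (meson le_less_trans mult_right_mono norm_ge_zero)
    then have "t *\<^sub>R z - p \<in> ball (- p) r" using that by (simp add: dist_norm)
    with r show ?thesis by blast
  qed
  define y where "y = (\<lambda>l::real. (1 - l) *\<^sub>R p + l *\<^sub>R z)"
  define S where "S = (\<lambda>l. {c::real. c > 0 \<and> cone_le T p (c *\<^sub>R y l)})"
  define L where "L = (\<lambda>l::real. e / (l + e * (1 - l)))"
  have MS: "cone_M T p (y l) = Inf (S l)" for l unfolding cone_M_def S_def by simp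
  have bounds: "L l \<le> cone_M T p (y l) \<and> cone_M T p (y l) \<le> 1 / (1 - l)"
    if l: "0 < l" "l < 1" for l
  proof -
    have inS: "1 / (1 - l) \<in> S l"
    proof -
      have "(1 / (1 - l)) *\<^sub>R y l - p = (l / (1 - l)) *\<^sub>R z"
        proof -
        have "(1 / (1 - l)) * (1 - l) = 1" using l by simp
        then show ?thesis using l by (simp add: y_def scaleR_add_right)
      qed
      also have "\<dots> \<in> ?C" using scC[OF _ zC] l by simp
      finally show ?thesis using l unfolding S_def cone_le_def by simp
    qed
    have lowS: "L l \<le> c" if c: "c \<in> S l" for c
    proof -
      have c0: "c > 0" and cC: "c *\<^sub>R y l - p \<in> ?C" using c unfolding S_def cone_le_def by auto
      have den: "l + e * (1 - l) > 0" using l e by (smt (verit) mult_nonneg_nonneg)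
      have L1: "L l \<le> 1"
        proof -
        have "e * l \<le> 1 * l" using e l by (intro mult_right_mono) auto
        then show "L l \<le> 1" using den unfolding L_def by (simp add: divide_simps algebra_simps)
      qed
      show ?thesis
      proof (cases "c \<ge> 1")
        case True then show ?thesis using L1 by simp
      next
        case False
        define d where "d = 1 - c * (1 - l)"
        have d: "d > 0" unfolding d_def using False l c0
          by (smt (verit) mult_left_le_one_le)
        have eq: "c *\<^sub>R y l - p = (c * l) *\<^sub>R z - d *\<^sub>R p"
          by (simp add: y_def d_def algebra_simps)
        have "(1/d) *\<^sub>R (c *\<^sub>R y l - p) \<in> ?C" using scC[OF _ cC] d by simp
        moreover have "(1/d) *\<^sub>R (c *\<^sub>R y l - p) = ((c * l) / d) *\<^sub>R z - p"
          using d by (simp add: eq algebra_simps)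
        ultimately have "((c * l) / d) *\<^sub>R z - p \<in> ?C" by simp
        with far[of "(c*l)/d"] have "(c * l) / d > e" using c0 l d by force
        then have "c * l > e * d" using d by (simp add: field_simps)
        then have "c * (l + e * (1 - l)) > e" unfolding d_def by (simp add: algebra_simps)
        then show ?thesis unfolding L_def using den by (simp add: field_simps)
      qed
    qed
    have ne: "S l \<noteq> {}" using inS by blast
    have bdd: "bdd_below (S l)" unfolding S_def by (rule bdd_belowI[of _ 0]) auto
    show ?thesis unfolding MS
      using cInf_lower[OF inS bdd] cInf_greatest[OF ne lowS] by simp
  qed
  have ev: "eventually (\<lambda>l. 0 < l \<and> l < 1) (at_right (0::real))"
    by (simp add: eventually_at_right_less eventually_at_right_field) (metis zero_less_one)
  have tL: "(L \<longlongrightarrow> 1) (at_right 0)"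
  proof -
    have "(L \<longlongrightarrow> e / (0 + e * (1 - 0))) (at_right 0)" unfolding L_def
      using e by (intro tendsto_intros) auto
    then show ?thesis using e by simp
  qed
  have tU: "((\<lambda>l::real. 1 / (1 - l)) \<longlongrightarrow> 1) (at_right 0)"
  proof -
    have "((\<lambda>l::real. 1 / (1 - l)) \<longlongrightarrow> 1 / (1 - 0)) (at_right 0)"
      by (intro tendsto_intros) auto
    then show ?thesis by simp
  qed
  have tM: "((\<lambda>l. cone_M T p (y l)) \<longlongrightarrow> 1) (at_right 0)"
    by (rule tendsto_sandwich[OF _ _ tL tU]) (use ev bounds in \<open>auto elim: eventually_mono\<close>)
  have "((\<lambda>l. ln (cone_M T p (y l)) - reverse_funk T b p) \<longlongrightarrow> ln 1 - reverse_funk T b p) (at_right 0)"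
    by (intro tendsto_intros tM) auto
  then show ?thesis unfolding horofun_def reverse_funk_def y_def by simp
qed

end
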